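(* Let $m\ge 0$, let $v$ be a derangement of order $m$, and let $n\ge m$. Then the map ${\bf\Phi}=\phi_1\circ\phi_2\circ\cdots\circ\phi_n$ defined below is a bijection of $\mathrm{Sh}(0^{n-m}v)$ onto itself, and for every $w\in\mathrm{Sh}(0^{n-m}v)$, $$\mathrm{RISE}\,w=\mathrm{RISE}^\bullet\,{\bf\Phi}(w).$$
   Context: Words have nonnegative integer letters. For a word $w=x_1\cdots x_n$: $\mathrm{RISE}\,w=\{i:1\le i\le n,\ x_i\le x_{i+1}\}$ with the convention $x_{n+1}=+\infty$ (so $n\in\mathrm{RISE}\,w$). $\mathrm{Pos}\,w$ is the subword of positive letters of $w$. For a word $v$ of positive integers of length $m\le n$, $\mathrm{Sh}(0^{n-m}v)$ is the set of words of length $n$ having exactly $n-m$ letters equal to $0$ and with $\mathrm{Pos}\,w=v$. A derangement of order $m$ is a word $y_1\cdots y_m$ that is a permutation of $1,2,\dots,m$ with $y_i\neq i$ for all $i$. Excedance: let $v$ be a derangement of order $m$ and $w=x_1\cdots x_n\in\mathrm{Sh}(0^{n-m}v)$. For each position $k$ with $x_k>0$, let $\mathrm{red}(k)$ be the number of positive letters among $x_1,\dots,x_k$. The positive letter $x_k$ is excedent if $x_k>\mathrm{red}(k)$ and subexcedent if $x_k<\mathrm{red}(k)$ (one of these always holds). A letter is non-subexcedent if it is $0$ or excedent. The fictitious letters $x_0=x_{n+1}=+\infty$ are regarded as excedent (hence non-subexcedent). $\mathrm{RISE}^\bullet w$ is the set of $i$, $1\le i\le n$, such that one of the following holds: (1)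 $0<x_i<x_{i+1}$; (2) $x_i=x_{i+1}=0$; (3) $x_i=0$ and $x_{i+1}$ is excedent; (4) $x_i$ is subexcedent and $x_{i+1}=0$. The maps $\phi_l$ ($1\le l\le n$) on $\mathrm{Sh}(0^{n-m}v)$: if $l>n-m$, $\phi_l(w)=w$. If $1\le l\le n-m$, let $j$ be the position of the $l$-th letter equal to $0$ in $w$, read from left to right. (a) If $x_{j-1}$ and $x_{j+1}$ are both non-subexcedent, $\phi_l(w)=w$. (b) If $x_{j-1}$ is non-subexcedent and $x_{j+1}$ is subexcedent, or if both are subexcedent with $x_{j-1}>x_{j+1}$: let $k$ be the greatest integer $k\ge j+1$ with $x_{j+1}<x_{j+2}<\cdots<x_k<\mathrm{red}(k)$, and set $\phi_l(w)=x_1\cdots x_{j-1}\,x_{j+1}\cdots x_k\,0\,x_{k+1}\cdots x_n$. (c) If $x_{j-1}$ is subexcedent and $x_{j+1}$ is non-subexcedent, or if both are subexcedent with $x_{j-1}<x_{j+1}$: let $i$ be the smallest integer $i\le j-1$ with $\mathrm{red}(i)>x_i>x_{i+1}>\cdots>x_{j-1}$, and set $\phi_l(w)=x_1\cdots x_{i-1}\,0\,x_i\cdots x_{j-1}\,x_{j+1}\cdots x_n$. Finally ${\bf\Phi}(w)=\phi_1(\phi_2(\cdots\phi_n(w)\cdots))$. *)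

theory Defs
  imports Main "HOL-Library.Extended_Nat"
begin

text \<open>Words are lists of natural numbers; positions are 1-indexed as in the paper:
  the letter x_i of w is w ! (i - 1) for 1 <= i <= length w.\<close>

definition xl :: "nat list \<Rightarrow> nat \<Rightarrow> nat" where
  "xl w i = w ! (i - 1)"

text \<open>Letters with the fictitious letters x_0 = x_(n+1) = +infinity.\<close>
definition lt :: "nat list \<Rightarrow> nat \<Rightarrow> enat" where
  "lt w i = (if 1 \<le> i \<and> i \<le> length w then enat (w ! (i - 1)) else \<infinity>)"

definition Pos :: "nat list \<Rightarrow> nat list" where
  "Pos w = filter (\<lambda>a. 0 < a) w"

definition RISE :: "nat list \<Rightarrow> nat set" where
  "RISE w = {i. 1 \<le> i \<and> i \<le> length w \<and> lt w i \<le> lt w (i + 1)}"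

definition Sh :: "nat \<Rightarrow> nat \<Rightarrow> nat list \<Rightarrow> nat list set" where
  "Sh n m v = {w. length w = n \<and> length (filter (\<lambda>a. a = 0) w) = n - m \<and> Pos w = v}"

definition derangement :: "nat \<Rightarrow> nat list \<Rightarrow> bool" where
  "derangement m v \<longleftrightarrow> length v = m \<and> distinct v \<and> set v = {1..m}
      \<and> (\<forall>i. 1 \<le> i \<and> i \<le> m \<longrightarrow> v ! (i - 1) \<noteq> i)"

definition red :: "nat list \<Rightarrow> nat \<Rightarrow> nat" where
  "red w k = length (filter (\<lambda>a. 0 < a) (take k w))"

definition Subexc :: "nat list \<Rightarrow> nat \<Rightarrow> bool" where
  "Subexc w k \<longleftrightarrow> 1 \<le> k \<and> k \<le> length w \<and> 0 < xl w k \<and> xl w k < red w k"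

definition Exc :: "nat list \<Rightarrow> nat \<Rightarrow> bool" where
  "Exc w k \<longleftrightarrow> k = 0 \<or> k = length w + 1
      \<or> (1 \<le> k \<and> k \<le> length w \<and> 0 < xl w k \<and> red w k < xl w k)"

definition NonSub :: "nat list \<Rightarrow> nat \<Rightarrow> bool" where
  "NonSub w k \<longleftrightarrow> (1 \<le> k \<and> k \<le> length w \<and> xl w k = 0) \<or> Exc w k"

definition RISEb :: "nat list \<Rightarrow> nat set" where
  "RISEb w = {i. 1 \<le> i \<and> i \<le> length w \<and>
      ((0 < lt w i \<and> lt w i < lt w (i + 1))
     \<or> (lt w i = 0 \<and> lt w (i + 1) = 0)
     \<or> (lt w i = 0 \<and> Exc w (i + 1))
     \<or> (Subexc w i \<and> lt w (i + 1) = 0))}"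

text \<open>Position (1-indexed) of the l-th letter equal to 0 (l >= 1).\<close>
definition zpos :: "nat list \<Rightarrow> nat \<Rightarrow> nat" where
  "zpos w l = [j \<leftarrow> [1..<length w + 1]. w ! (j - 1) = 0] ! (l - 1)"

definition phi :: "nat \<Rightarrow> nat \<Rightarrow> nat list \<Rightarrow> nat list" where
  "phi m l w = (let n = length w in
     if l = 0 \<or> n - m < l then w else
     let j = zpos w l in
     if NonSub w (j - 1) \<and> NonSub w (j + 1) then w
     else if (NonSub w (j - 1) \<and> Subexc w (j + 1))
           \<or> (Subexc w (j - 1) \<and> Subexc w (j + 1) \<and> xl w (j + 1) < xl w (j - 1)) then
       (let k = (GREATEST k. j + 1 \<le> k \<and> k \<le> n
                   \<and> (\<forall>t. j + 1 \<le> t \<and> t < k \<longrightarrow> xl w t < xl w (t + 1))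
                   \<and> xl w k < red w k)
        in take (j - 1) w @ drop j (take k w) @ [0] @ drop k w)
     else if (Subexc w (j - 1) \<and> NonSub w (j + 1))
           \<or> (Subexc w (j - 1) \<and> Subexc w (j + 1) \<and> xl w (j - 1) < xl w (j + 1)) then
       (let i = (LEAST i. 1 \<le> i \<and> i \<le> j - 1 \<and> xl w i < red w i
                   \<and> (\<forall>t. i \<le> t \<and> t < j - 1 \<longrightarrow> xl w (t + 1) < xl w t))
        in take (i - 1) w @ [0] @ drop (i - 1) (take (j - 1) w) @ drop j w)
     else w)"

definition Phi :: "nat \<Rightarrow> nat \<Rightarrow> nat list \<Rightarrow> nat list" where
  "Phi n m w = foldr (phi m) [1..<n + 1] w"

end

theory Submission
  imports Defs "HOL-Library.Extended_Nat"
begin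

definition idx :: "nat list \<Rightarrow> nat \<Rightarrow> nat" where
  "idx v a = Suc (THE q. q < length v \<and> v ! q = a)"
definition Sv :: "nat list \<Rightarrow> nat \<Rightarrow> bool" where "Sv v a \<longleftrightarrow> 0 < a \<and> a < idx v a"
definition Ev :: "nat list \<Rightarrow> nat \<Rightarrow> bool" where "Ev v a \<longleftrightarrow> 0 < a \<and> idx v a < a"
definition zs :: "nat list \<Rightarrow> nat" where "zs w = length (filter (\<lambda>a. a = 0) w)"

lemma idx_eq: assumes "distinct v" "q < length v" "v ! q = a" shows "idx v a = Suc q"
proof -
  have "(THE q. q < length v \<and> v ! q = a) = q"
    using assms by (intro the_equality) (auto simp: nth_eq_iff_index_eq)
  thus ?thesis by (simp add: idx_def)
qed

lemma idx_pos: assumes "Pos u = v" "distinct v" "u = X @ a # Y" "0 < a"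
  shows "idx v a = Suc (length (Pos X))"
proof -
  have "v = Pos X @ a # Pos Y" using assms by (simp add: Pos_def)
  thus ?thesis using assms(2) by (intro idx_eq) (auto simp: nth_append)
qed

lemma idx_adj: assumes "Pos u = v" "distinct v" "u = X @ a # Z @ b # Y" "0 < a" "0 < b" "Pos Z = []"
  shows "idx v b = Suc (idx v a)"
proof -
  have 1: "idx v a = Suc (length (Pos X))" using idx_pos[OF assms(1,2,3,4)] .
  have "u = (X @ a # Z) @ b # Y" using assms(3) by simp
  from idx_pos[OF assms(1,2) this assms(5)] have "idx v b = Suc (length (Pos (X @ a # Z)))" .
  thus ?thesis using 1 assms(4,6) by (simp add: Pos_def)
qed

lemma red_at: assumes "Pos u = v" "distinct v" "1 \<le> p" "p \<le> length u" "0 < u ! (p - 1)"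
  shows "red u p = idx v (u ! (p - 1))"
proof -
  have u: "u = take (p - 1) u @ u ! (p - 1) # drop p u"
    using assms id_take_nth_drop[of "p - 1" u] by simp
  have t: "take p u = take (p - 1) u @ [u ! (p - 1)]"
    using assms take_Suc_conv_app_nth[of "p - 1" u] by simp
  show ?thesis using idx_pos[OF assms(1,2) u assms(5)] assms(5) unfolding red_def t
    by (simp add: Pos_def)
qed

lemma Subexc_iff: assumes "Pos u = v" "distinct v"
  shows "Subexc u p \<longleftrightarrow> 1 \<le> p \<and> p \<le> length u \<and> Sv v (u ! (p - 1))"
  using red_at[OF assms] unfolding Subexc_def Sv_def xl_def by auto

lemma Exc_iff: assumes "Pos u = v" "distinct v"
  shows "Exc u p \<longleftrightarrow> p = 0 \<or> p = Suc (length u) \<or> (1 \<le> p \<and> p \<le> length u \<and> Ev v (u ! (p - 1)))"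
proof -
  have "red u p < u ! (p - 1) \<longleftrightarrow> idx v (u ! (p - 1)) < u ! (p - 1)" if "1 \<le> p" "p \<le> length u" "0 < u ! (p - 1)"
    using red_at[OF assms that] by simp
  thus ?thesis unfolding Exc_def Ev_def xl_def by auto
qed

lemma NonSub_iff: assumes "Pos u = v" "distinct v"
  shows "NonSub u p \<longleftrightarrow> p = 0 \<or> p = Suc (length u) \<or> (1 \<le> p \<and> p \<le> length u \<and> (u ! (p - 1) = 0 \<or> Ev v (u ! (p - 1))))"
  unfolding NonSub_def Exc_iff[OF assms] xl_def by auto

lemma der_distinct: "derangement m v \<Longrightarrow> distinct v" by (simp add: derangement_def)

lemma der_dich: assumes "derangement m v" "a \<in> set v"
  shows "Sv v a \<or> Ev v a"
proof -
  obtain q where q: "q < length v" "v ! q = a" using assms(2) by (auto simp: in_set_conv_nth)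
  have i: "idx v a = Suc q" using idx_eq[OF der_distinct[OF assms(1)] q] .
  have d: "length v = m" "set v = {1..m}" "\<forall>i. 1 \<le> i \<and> i \<le> m \<longrightarrow> v ! (i - 1) \<noteq> i"
    using assms(1) unfolding derangement_def by auto
  have "a \<noteq> Suc q" using d(3)[rule_format, of "Suc q"] q d(1) by auto
  moreover have "0 < a" using d(2) assms(2) by force
  ultimately show ?thesis unfolding Sv_def Ev_def i by auto
qed

lemma pos_in_v: "Pos u = v \<Longrightarrow> a \<in> set u \<Longrightarrow> 0 < a \<Longrightarrow> a \<in> set v"
  by (auto simp: Pos_def)

lemma SE_excl: "Sv v a \<Longrightarrow> \<not> Ev v a" by (auto simp: Sv_def Ev_def)

definition zc :: "nat list \<Rightarrow> nat \<Rightarrow> nat" where "zc w i = zs (take i w)"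

definition rl :: "nat list \<Rightarrow> nat \<Rightarrow> nat \<Rightarrow> nat \<Rightarrow> enat \<Rightarrow> bool" where
  "rl v l z a b \<longleftrightarrow> (0 < a \<and> enat a < b) \<or> (a = 0 \<and> (z < l \<or> b = 0 \<or> b = \<infinity> \<or> (\<exists>x. b = enat x \<and> Ev v x)))
     \<or> (0 < a \<and> b = 0 \<and> l \<le> Suc z \<and> Sv v a)"

definition Rl :: "nat list \<Rightarrow> nat \<Rightarrow> nat list \<Rightarrow> nat set" where
  "Rl v l w = {i. 1 \<le> i \<and> i \<le> length w \<and> rl v l (zc w i) (w ! (i - 1)) (lt w (Suc i))}"

lemma lt_Suc: "lt w (Suc i) = (if i < length w then enat (w ! i) else \<infinity>)"
  by (auto simp: lt_def)

lemma rl_shift: assumes "a = 0 \<longrightarrow> z \<noteq> l" "0 < a \<and> b = 0 \<longrightarrow> Suc z \<noteq> l"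
  shows "rl v (Suc l) z a b = rl v l z a b"
  using assms unfolding rl_def by auto

lemma zs_append[simp]: "zs (X @ Y) = zs X + zs Y" by (simp add: zs_def)
lemma zs_Cons[simp]: "zs (a # Y) = (if a = 0 then Suc (zs Y) else zs Y)" by (simp add: zs_def)
lemma zs_Nil[simp]: "zs [] = 0" by (simp add: zs_def)
lemma zs_pos: "\<forall>x\<in>set C. 0 < x \<Longrightarrow> zs C = 0" by (induct C) auto

lemma zs_take_le: "zs (take i A) \<le> zs A"
  by (metis append_take_drop_id le_add1 zs_append)

lemma zs_take_Suc: "i < length A \<Longrightarrow> zs (take (Suc i) A) = zs (take i A) + (if A ! i = 0 then 1 else 0)"
  by (simp add: take_Suc_conv_app_nth)

lemma zs_take_Suc_le: "i < length A \<Longrightarrow> zs (take (Suc i) A) \<le> zs A"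
  using zs_take_le by blast

lemma prefix_region:
  assumes "zs A < l" "1 \<le> i" "i < length A"
  shows "rl v (Suc l) (zc (A @ Ya) i) ((A @ Ya) ! (i - 1)) (lt (A @ Ya) (Suc i))
       = rl v l (zc (A @ Yb) i) ((A @ Yb) ! (i - 1)) (lt (A @ Yb) (Suc i))"
proof -
  have e: "zc (A @ Y) i = zs (take i A)" "(A @ Y) ! (i - 1) = A ! (i - 1)" "lt (A @ Y) (Suc i) = enat (A ! i)" for Y
    using assms by (auto simp: zc_def lt_Suc nth_append)
  have "zs (take i A) \<le> zs A" by (rule zs_take_le)
  moreover have "zs (take i A) + (if A ! i = 0 then 1 else 0) \<le> zs A"
    using zs_take_Suc_le[OF assms(3)] zs_take_Suc[OF assms(3)] by simp
  ultimately show ?thesis unfolding e using assms(1) by (intro rl_shift) (auto simp: zero_enat_def)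
qed

lemma suffix_region:
  assumes "length P1 = length P2" "zs P1 = l" "zs P2 = l" "length P1 < i" "i \<le> length P1 + length D"
  shows "rl v (Suc l) (zc (P1 @ D) i) ((P1 @ D) ! (i - 1)) (lt (P1 @ D) (Suc i))
       = rl v l (zc (P2 @ D) i) ((P2 @ D) ! (i - 1)) (lt (P2 @ D) (Suc i))"
proof -
  let ?p = "length P1"
  have e: "zc (P @ D) i = l + zs (take (i - ?p) D)" "(P @ D) ! (i - 1) = D ! (i - 1 - ?p)"
       "lt (P @ D) (Suc i) = lt D (Suc (i - ?p))" if "length P = ?p" "zs P = l" for P
    using assms that by (auto simp: zc_def lt_Suc nth_append)
  have "D ! (i - 1 - ?p) = 0 \<Longrightarrow> zs (take (i - ?p) D) \<noteq> 0"
  proof -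
    assume 0: "D ! (i - 1 - ?p) = 0"
    have "i - 1 - ?p < length D" "Suc (i - 1 - ?p) = i - ?p" using assms by auto
    thus ?thesis using zs_take_Suc[of "i - 1 - ?p" D] 0 by simp
  qed
  thus ?thesis unfolding e[OF refl assms(2)] e[OF assms(1)[symmetric] assms(3)]
    by (intro rl_shift) auto
qed

lemma last_conv_nth': "C \<noteq> [] \<Longrightarrow> last C = C ! (length C - 1)" by (simp add: last_conv_nth)

lemma step_b:
  assumes zA: "zs A = l - 1" and l1: "1 \<le> l" and Cne: "C \<noteq> []" and Cpos: "\<forall>x\<in>set C. 0 < x"
    and Cinc: "\<forall>t. Suc t < length C \<longrightarrow> C ! t < C ! Suc t" and SC: "Sv v (last C)"
    and L: "A = [] \<or> last A = 0 \<or> \<not> last A < hd C"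
    and R: "D = [] \<or> hd D = 0 \<or> (last C < hd D \<longleftrightarrow> Ev v (hd D))"
  shows "Rl v (Suc l) (A @ 0 # C @ D) = Rl v l (A @ C @ 0 # D)"
proof -
  let ?u = "A @ 0 # C @ D" and ?w = "A @ C @ 0 # D"
  let ?a = "length A" and ?c = "length C"
  have zC: "zs C = 0" using zs_pos[OF Cpos] .
  have cpos: "0 < ?c" using Cne by simp
  have key: "rl v (Suc l) (zc ?u i) (?u ! (i - 1)) (lt ?u (Suc i)) = rl v l (zc ?w i) (?w ! (i - 1)) (lt ?w (Suc i))"
    if i: "1 \<le> i" "i \<le> length ?u" for i
  proof -
    consider "i < ?a" | "i = ?a" | "?a < i \<and> i \<le> ?a + ?c" | "i = ?a + ?c + 1" | "?a + ?c + 1 < i" by linarith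
    thus ?thesis
    proof cases
      case 1
      show ?thesis using prefix_region[where A=A and l=l and i=i and Ya="0 # C @ D" and v=v and Yb="C @ 0 # D"] zA l1 i 1 by simp
    next
      case 2
      have Ane: "A \<noteq> []" using 2 i by auto
      have e: "?u ! (i - 1) = last A" "?w ! (i - 1) = last A" "lt ?u (Suc i) = 0" "lt ?w (Suc i) = enat (hd C)"
        "zc ?u i = l - 1" "zc ?w i = l - 1" "A \<noteq> []"
        using 2 i Cne zA Ane by (auto simp: nth_append lt_Suc zc_def last_conv_nth hd_conv_nth zero_enat_def)
      have "0 < hd C" using Cpos Cne by simp
      thus ?thesis unfolding e using L l1 e(7) by (auto simp: rl_def zero_enat_def)
    next
      case 3
      have lhs: "rl v (Suc l) (zc ?u i) (?u ! (i - 1)) (lt ?u (Suc i))"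
      proof (cases "i = ?a + 1")
        case True
        have "?u ! (i - 1) = 0" "zc ?u i = l" using True zA l1 by (auto simp: nth_append zc_def)
        thus ?thesis by (simp add: rl_def)
      next
        case False
        hence e: "?u ! (i - 1) = C ! (i - ?a - 2)" "lt ?u (Suc i) = enat (C ! Suc (i - ?a - 2))"
          using 3 by (auto simp: nth_append lt_Suc Suc_diff_Suc numeral_2_eq_2)
        have "Suc (i - ?a - 2) < ?c" using 3 False by auto
        thus ?thesis unfolding e using Cinc Cpos by (auto simp: rl_def)
      qed
      have rhs: "rl v l (zc ?w i) (?w ! (i - 1)) (lt ?w (Suc i))"
      proof (cases "i = ?a + ?c")
        case True
        have i1: "i - 1 = ?a + (?c - 1)" using True cpos by arith
        have "?w ! (i - 1) = last C" unfolding i1 using Cne by (simp add: nth_append last_conv_nth)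
        moreover have "zc ?w i = l - 1" "lt ?w (Suc i) = 0"
          using True zA l1 Cne zC cpos by (auto simp: nth_append zc_def lt_Suc last_conv_nth zero_enat_def)
        ultimately show ?thesis using SC l1 Cne Cpos by (auto simp: rl_def zero_enat_def)
      next
        case False
        hence e: "?w ! (i - 1) = C ! (i - ?a - 1)" "lt ?w (Suc i) = enat (C ! Suc (i - ?a - 1))"
          using 3 by (auto simp: nth_append lt_Suc Suc_diff_Suc)
        have "Suc (i - ?a - 1) < ?c" using 3 False by auto
        thus ?thesis unfolding e using Cinc Cpos by (auto simp: rl_def)
      qed
      show ?thesis using lhs rhs by simp
    next
      case 4
      have e: "?u ! (i - 1) = last C" "?w ! (i - 1) = 0" "lt ?u (Suc i) = lt D 1" "lt ?w (Suc i) = lt D 1"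
        "zc ?u i = l" "zc ?w i = l"
        using 4 i Cne zA zC l1 cpos by (auto simp: nth_append lt_Suc zc_def last_conv_nth lt_def)
      have lD: "lt D 1 = (if D = [] then \<infinity> else enat (hd D))" by (cases D) (auto simp: lt_def)
      show ?thesis unfolding e lD using R SC Cne Cpos by (auto simp: rl_def zero_enat_def)
    next
      case 5
      have "rl v (Suc l) (zc ((A @ 0 # C) @ D) i) (((A @ 0 # C) @ D) ! (i - 1)) (lt ((A @ 0 # C) @ D) (Suc i))
       = rl v l (zc ((A @ C @ [0]) @ D) i) (((A @ C @ [0]) @ D) ! (i - 1)) (lt ((A @ C @ [0]) @ D) (Suc i))"
        using 5 i zA zC l1 by (intro suffix_region) auto
      thus ?thesis by simp
    qed
  qed
  show ?thesis unfolding Rl_def using key by auto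
qed

lemma step_c:
  assumes zA: "zs A = l - 1" and l1: "1 \<le> l" and Cne: "C \<noteq> []" and Cpos: "\<forall>x\<in>set C. 0 < x"
    and Cdec: "\<forall>t. Suc t < length C \<longrightarrow> C ! Suc t < C ! t" and SC1: "Sv v (hd C)" and SC2: "Sv v (last C)"
    and L: "A = [] \<or> last A = 0 \<or> (Sv v (last A) \<longleftrightarrow> last A < hd C)"
    and R: "D = [] \<or> hd D = 0 \<or> last C < hd D"
  shows "Rl v (Suc l) (A @ C @ 0 # D) = Rl v l (A @ 0 # C @ D)"
proof -
  let ?u = "A @ C @ 0 # D" and ?w = "A @ 0 # C @ D"
  let ?a = "length A" and ?c = "length C"
  have zC: "zs C = 0" using zs_pos[OF Cpos] .
  have cpos: "0 < ?c" using Cne by simp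
  have nE: "\<not> Ev v (hd C)" using SC1 by (rule SE_excl)
  have key: "rl v (Suc l) (zc ?u i) (?u ! (i - 1)) (lt ?u (Suc i)) = rl v l (zc ?w i) (?w ! (i - 1)) (lt ?w (Suc i))"
    if i: "1 \<le> i" "i \<le> length ?u" for i
  proof -
    consider "i < ?a" | "i = ?a" | "?a < i \<and> i \<le> ?a + ?c" | "i = ?a + ?c + 1" | "?a + ?c + 1 < i" by linarith
    thus ?thesis
    proof cases
      case 1
      show ?thesis using prefix_region[where A=A and l=l and i=i and Ya="C @ 0 # D" and v=v and Yb="0 # C @ D"] zA l1 i 1 by simp
    next
      case 2
      have Ane: "A \<noteq> []" using 2 i by auto
      have e: "?u ! (i - 1) = last A" "?w ! (i - 1) = last A" "lt ?w (Suc i) = 0" "lt ?u (Suc i) = enat (hd C)"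
        "zc ?u i = l - 1" "zc ?w i = l - 1"
        using 2 i Cne zA Ane by (auto simp: nth_append lt_Suc zc_def last_conv_nth hd_conv_nth zero_enat_def)
      have "0 < hd C" using Cpos Cne by simp
      thus ?thesis unfolding e using L l1 Ane by (auto simp: rl_def zero_enat_def)
    next
      case 3
      have lhs: "\<not> rl v (Suc l) (zc ?u i) (?u ! (i - 1)) (lt ?u (Suc i))"
      proof (cases "i = ?a + ?c")
        case True
        have i1: "i - 1 = ?a + (?c - 1)" using True cpos by arith
        have "?u ! (i - 1) = last C" unfolding i1 using Cne by (simp add: nth_append last_conv_nth)
        moreover have "zc ?u i = l - 1" "lt ?u (Suc i) = 0"
          using True zA l1 Cne zC cpos by (auto simp: nth_append zc_def lt_Suc zero_enat_def)
        ultimately show ?thesis using l1 Cne Cpos by (auto simp: rl_def zero_enat_def)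
      next
        case False
        hence e: "?u ! (i - 1) = C ! (i - ?a - 1)" "lt ?u (Suc i) = enat (C ! Suc (i - ?a - 1))"
          using 3 by (auto simp: nth_append lt_Suc Suc_diff_Suc)
        have lt1: "Suc (i - ?a - 1) < ?c" using 3 False by auto
        hence "0 < C ! Suc (i - ?a - 1)" using Cpos nth_mem by blast
        thus ?thesis unfolding e using Cdec Cpos lt1 by (auto simp: rl_def zero_enat_def)
      qed
      have rhs: "\<not> rl v l (zc ?w i) (?w ! (i - 1)) (lt ?w (Suc i))"
      proof (cases "i = ?a + 1")
        case True
        have "?w ! (i - 1) = 0" "zc ?w i = l" "lt ?w (Suc i) = enat (hd C)" using True zA l1 Cne
          by (auto simp: nth_append zc_def lt_Suc hd_conv_nth)
        moreover have "0 < hd C" using Cpos Cne by simp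
        ultimately show ?thesis using nE by (auto simp: rl_def zero_enat_def)
      next
        case False
        hence e: "?w ! (i - 1) = C ! (i - ?a - 2)" "lt ?w (Suc i) = enat (C ! Suc (i - ?a - 2))"
          using 3 by (auto simp: nth_append lt_Suc Suc_diff_Suc numeral_2_eq_2)
        have lt1: "Suc (i - ?a - 2) < ?c" using 3 False by auto
        hence "0 < C ! Suc (i - ?a - 2)" using Cpos nth_mem by blast
        thus ?thesis unfolding e using Cdec Cpos lt1 by (auto simp: rl_def zero_enat_def)
      qed
      show ?thesis using lhs rhs by simp
    next
      case 4
      have e: "?w ! (i - 1) = last C" "?u ! (i - 1) = 0" "lt ?u (Suc i) = lt D 1" "lt ?w (Suc i) = lt D 1"
        "zc ?u i = l" "zc ?w i = l"
        using 4 i Cne zA zC l1 cpos by (auto simp: nth_append lt_Suc zc_def last_conv_nth lt_def)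
      have lD: "lt D 1 = (if D = [] then \<infinity> else enat (hd D))" by (cases D) (auto simp: lt_def)
      show ?thesis unfolding e lD using R SC2 Cne Cpos by (auto simp: rl_def zero_enat_def)
    next
      case 5
      have "rl v (Suc l) (zc ((A @ C @ [0]) @ D) i) (((A @ C @ [0]) @ D) ! (i - 1)) (lt ((A @ C @ [0]) @ D) (Suc i))
       = rl v l (zc ((A @ 0 # C) @ D) i) (((A @ 0 # C) @ D) ! (i - 1)) (lt ((A @ 0 # C) @ D) (Suc i))"
        using 5 i zA zC l1 by (intro suffix_region) auto
      thus ?thesis by simp
    qed
  qed
  show ?thesis unfolding Rl_def using key by auto
qed

lemma decomp_exists: "1 \<le> l \<Longrightarrow> l \<le> zs u \<Longrightarrow> \<exists>A B. u = A @ 0 # B \<and> zs A = l - 1"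
proof (induct u arbitrary: l)
  case Nil thus ?case by simp
next
  case (Cons x u)
  show ?case
  proof (cases "x = 0 \<and> l = 1")
    case True thus ?thesis by (intro exI[of _ "[]"] exI[of _ u]) auto
  next
    case False
    hence "1 \<le> (if x = 0 then l - 1 else l)" "(if x = 0 then l - 1 else l) \<le> zs u"
      using Cons.prems by auto
    from Cons.hyps[OF this] obtain A B where "u = A @ 0 # B" "zs A = (if x = 0 then l - 1 else l) - 1" by blast
    thus ?thesis using Cons.prems False by (intro exI[of _ "x # A"] exI[of _ B]) auto
  qed
qed

lemma decomp_unique: "X1 @ 0 # Y1 = X2 @ 0 # Y2 \<Longrightarrow> zs X1 = zs X2 \<Longrightarrow> X1 = X2 \<and> Y1 = Y2"
proof (induct X1 arbitrary: X2)
  case Nil thus ?case by (cases X2) auto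
next
  case (Cons x X1)
  thus ?case by (cases X2) (auto split: if_splits)
qed

lemma zpos_decomp: assumes "u = A @ 0 # B" "zs A = l - 1" "1 \<le> l"
  shows "zpos u l = Suc (length A)"
proof -
  let ?P = "\<lambda>j. u ! (j - 1) = 0"
  have up: "[1..<length u + 1] = [1..<Suc (length A)] @ [Suc (length A)] @ [Suc (Suc (length A))..<length u + 1]"
  proof -
    have "length u + 1 = Suc (length A) + (1 + length B)" using assms(1) by simp
    hence "[1..<length u + 1] = [1..<Suc (length A)] @ [Suc (length A)..<Suc (length A) + (1 + length B)]"
      using upt_add_eq_append[of 1 "Suc (length A)" "1 + length B"] by simp
    also have "[Suc (length A)..<Suc (length A) + (1 + length B)] = Suc (length A) # [Suc (Suc (length A))..<Suc (length A) + (1 + length B)]"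
      by (rule upt_conv_Cons) simp
    finally show ?thesis using assms(1) by simp
  qed
  have m: "map (\<lambda>j. u ! (j - 1)) [1..<Suc (length A)] = A"
    using assms(1) by (intro nth_equalityI) (auto simp: nth_append simp del: upt_Suc)
  have len: "length (filter ?P [1..<Suc (length A)]) = zs A"
  proof -
    have "length (filter ?P [1..<Suc (length A)]) = length (filter (\<lambda>x. x = 0) (map (\<lambda>j. u ! (j - 1)) [1..<Suc (length A)]))"
      by (simp add: filter_map comp_def)
    thus ?thesis unfolding m zs_def .
  qed
  have "u ! length A = 0" using assms(1) by simp
  hence f: "filter ?P [1..<length u + 1] = filter ?P [1..<Suc (length A)] @ Suc (length A) # filter ?P [Suc (Suc (length A))..<length u + 1]"
    unfolding up by simp
  show ?thesis unfolding zpos_def f using len assms(2,3) by (simp add: nth_append)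
qed

locale Dm = fixes m :: nat and v :: "nat list" assumes der: "derangement m v"
begin

lemma dist: "distinct v" using der by (rule der_distinct)

lemma dich: "Pos u = v \<Longrightarrow> a \<in> set u \<Longrightarrow> 0 < a \<Longrightarrow> Sv v a \<or> Ev v a"
  using der_dich[OF der] pos_in_v by blast

definition NL :: "nat list \<Rightarrow> bool" where "NL A \<longleftrightarrow> A = [] \<or> last A = 0 \<or> Ev v (last A)"
definition SL :: "nat list \<Rightarrow> bool" where "SL A \<longleftrightarrow> A \<noteq> [] \<and> Sv v (last A)"
definition NR :: "nat list \<Rightarrow> bool" where "NR B \<longleftrightarrow> B = [] \<or> hd B = 0 \<or> Ev v (hd B)"
definition SR :: "nat list \<Rightarrow> bool" where "SR B \<longleftrightarrow> B \<noteq> [] \<and> Sv v (hd B)"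

lemma nb_facts:
  assumes P: "Pos u = v" and u: "u = A @ 0 # B"
  shows "NonSub u (length A) \<longleftrightarrow> NL A" "Subexc u (length A) \<longleftrightarrow> SL A"
        "NonSub u (Suc (Suc (length A))) \<longleftrightarrow> NR B" "Subexc u (Suc (Suc (length A))) \<longleftrightarrow> SR B"
        "A \<noteq> [] \<Longrightarrow> xl u (length A) = last A" "B \<noteq> [] \<Longrightarrow> xl u (Suc (Suc (length A))) = hd B"
proof -
  have a: "A \<noteq> [] \<Longrightarrow> u ! (length A - 1) = last A" using u by (simp add: nth_append last_conv_nth)
  have b: "B \<noteq> [] \<Longrightarrow> u ! (Suc (Suc (length A)) - 1) = hd B" using u by (simp add: nth_append hd_conv_nth)
  have lu: "length u = Suc (length A + length B)" using u by simp
  have la: "Suc 0 \<le> length A \<longleftrightarrow> A \<noteq> []" "Suc 0 \<le> length B \<longleftrightarrow> B \<noteq> []" by (cases A; cases B; auto)+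
  show "NonSub u (length A) \<longleftrightarrow> NL A" unfolding NonSub_iff[OF P dist] NL_def using a lu la by auto
  show "Subexc u (length A) \<longleftrightarrow> SL A" unfolding Subexc_iff[OF P dist] SL_def using a lu la by auto
  show "NonSub u (Suc (Suc (length A))) \<longleftrightarrow> NR B" unfolding NonSub_iff[OF P dist] NR_def using b lu la by auto
  show "Subexc u (Suc (Suc (length A))) \<longleftrightarrow> SR B" unfolding Subexc_iff[OF P dist] SR_def using b lu la by auto
  show "A \<noteq> [] \<Longrightarrow> xl u (length A) = last A" using a by (simp add: xl_def)
  show "B \<noteq> [] \<Longrightarrow> xl u (Suc (Suc (length A))) = hd B" using b by (simp add: xl_def)
qed

end

lemma red_Suc: "k < length u \<Longrightarrow> red u (Suc k) = red u k + (if 0 < u ! k then 1 else 0)"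
  by (simp add: red_def take_Suc_conv_app_nth)

context Dm begin

lemma phi_b:
  assumes P: "Pos u = v" and u: "u = A @ 0 # B" and zA: "zs A = l - 1" and l1: "1 \<le> l" and ln: "l \<le> length u - m"
    and nA: "\<not> (NL A \<and> NR B)" and cb: "(NL A \<and> SR B) \<or> (SL A \<and> SR B \<and> hd B < last A)"
  shows "\<exists>C D. B = C @ D \<and> phi m l u = A @ C @ 0 # D \<and> C \<noteq> [] \<and> (\<forall>x\<in>set C. 0 < x)
     \<and> (\<forall>t. Suc t < length C \<longrightarrow> C ! t < C ! Suc t) \<and> Sv v (last C)
     \<and> (A = [] \<or> last A = 0 \<or> \<not> last A < hd C)
     \<and> (D = [] \<or> hd D = 0 \<or> (last C < hd D \<longleftrightarrow> Ev v (hd D)))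
     \<and> (D = [] \<or> hd D = 0 \<or> Ev v (hd D) \<or> (Sv v (hd D) \<and> hd D < last C))"
proof -
  let ?a = "length A"
  have j: "zpos u l = Suc ?a" using zpos_decomp[OF u zA l1] .
  note nb = nb_facts[OF P u]
  have SRB: "SR B" using cb by auto
  hence Bne: "B \<noteq> []" and SvB: "Sv v (hd B)" by (auto simp: SR_def)
  have lu: "length u = Suc (?a + length B)" using u by simp
  define Q where "Q = (\<lambda>k. Suc (Suc ?a) \<le> k \<and> k \<le> length u \<and> (\<forall>t. Suc (Suc ?a) \<le> t \<and> t < k \<longrightarrow> xl u t < xl u (t + 1)) \<and> xl u k < red u k)"
  have c1: "NonSub u ?a \<and> Subexc u (Suc (Suc ?a)) \<or> Subexc u ?a \<and> Subexc u (Suc (Suc ?a)) \<and> xl u (Suc (Suc ?a)) < xl u ?a"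
    using cb nb Bne by (auto simp: SL_def)
  have c0: "\<not> (NonSub u ?a \<and> NonSub u (Suc (Suc ?a)))" using nA nb by auto
  have phi_eq: "phi m l u = take ?a u @ drop (Suc ?a) (take (Greatest Q) u) @ [0] @ drop (Greatest Q) u"
    using c0 c1 l1 ln unfolding phi_def Let_def j Q_def by (simp, blast)
  have xB: "xl u (Suc ?a + t) = B ! (t - 1)" if "1 \<le> t" for t
    using u that by (simp add: xl_def nth_append)
  have Q0: "Q (Suc (Suc ?a))"
    using nb(4) SRB lu Bne unfolding Q_def Subexc_def by auto
  have Qb: "\<And>y. Q y \<Longrightarrow> y \<le> length u" unfolding Q_def by auto
  define k where "k = Greatest Q"
  have Qk: "Q k" unfolding k_def using GreatestI_nat[of Q _ "length u", OF Q0 Qb] .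
  have kmax: "\<And>y. Q y \<Longrightarrow> y \<le> k" unfolding k_def using Greatest_le_nat[of Q _ "length u"] Qb by blast
  define q where "q = k - Suc ?a"
  have q1: "1 \<le> q" and qB: "q \<le> length B" and kq: "k = Suc ?a + q" using Qk lu unfolding Q_def q_def by auto
  define C where "C = take q B"
  define D where "D = drop q B"
  have BCD: "B = C @ D" unfolding C_def D_def by simp
  have lC: "length C = q" unfolding C_def using qB by simp
  have Cn: "C ! t = B ! t" if "t < q" for t unfolding C_def using that by simp
  have inc: "B ! t < B ! Suc t" if "Suc t < q" for t
  proof -
    have "xl u (Suc ?a + Suc t) < xl u (Suc ?a + Suc t + 1)"
      using Qk that kq unfolding Q_def by auto
    thus ?thesis using xB[of "Suc t"] xB[of "Suc (Suc t)"] by simp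
  qed
  have posB: "0 < B ! t" if "t < q" for t
    using that
  proof (induct t)
    case 0 thus ?case using SvB Bne by (simp add: Sv_def hd_conv_nth)
  next
    case (Suc t) thus ?case using inc[of t] by simp
  qed
  have Cne: "C \<noteq> []" using lC q1 by auto
  have Cpos: "\<forall>x\<in>set C. 0 < x" using posB Cn lC by (auto simp: in_set_conv_nth)
  have Cinc: "\<forall>t. Suc t < length C \<longrightarrow> C ! t < C ! Suc t" using inc Cn lC by auto
  have lastC: "last C = B ! (q - 1)" using Cne lC Cn q1 by (simp add: last_conv_nth)
  have hdC: "hd C = hd B" using Cne Bne unfolding BCD by simp
  have xk: "xl u k = last C" using xB[of q] q1 kq lastC by simp
  have uk: "u ! (k - 1) = last C" using xk by (simp add: xl_def)
  have k1: "1 \<le> k" "k \<le> length u" using kq lu qB by auto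
  have lCpos: "0 < last C" using Cpos Cne by simp
  have redk: "red u k = idx v (last C)" using red_at[OF P dist k1] uk lCpos by simp
  have SvC: "Sv v (last C)" using Qk xk redk lCpos unfolding Q_def Sv_def by simp
  have L: "A = [] \<or> last A = 0 \<or> \<not> last A < hd C"
  proof (cases "A = [] \<or> last A = 0")
    case False
    hence Ane: "A \<noteq> []" and lA: "last A \<noteq> 0" by auto
    have uA: "u ! (?a - 1) = last A" using u Ane by (simp add: nth_append last_conv_nth)
    have uA2: "u ! ?a = 0" "u ! Suc ?a = hd B" using u Bne by (auto simp: nth_append hd_conv_nth)
    have a1: "1 \<le> ?a" using Ane by (cases A) auto
    have "red u (Suc (Suc ?a)) = Suc (red u ?a)"
      using red_Suc[of ?a u] red_Suc[of "Suc ?a" u] uA2 lu Bne SvB by (auto simp: Sv_def)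
    moreover have "red u ?a = idx v (last A)" using red_at[OF P dist a1] uA lA lu by simp
    moreover have "red u (Suc (Suc ?a)) = idx v (hd B)"
    proof -
      have "Suc 0 \<le> length B" using Bne by (cases B) auto
      thus ?thesis using red_at[OF P dist, of "Suc (Suc ?a)"] uA2 lu SvB by (auto simp: Sv_def)
    qed
    ultimately have ii: "idx v (hd B) = Suc (idx v (last A))" by simp
    have "\<not> last A < hd B"
    proof (cases "NL A")
      case True
      hence "Ev v (last A)" using Ane lA by (simp add: NL_def)
      thus ?thesis using SvB ii by (simp add: Sv_def Ev_def)
    next
      case False thus ?thesis using cb by auto
    qed
    thus ?thesis using hdC by simp
  qed (auto)
  have R: "(D = [] \<or> hd D = 0 \<or> (last C < hd D \<longleftrightarrow> Ev v (hd D)))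
     \<and> (D = [] \<or> hd D = 0 \<or> Ev v (hd D) \<or> (Sv v (hd D) \<and> hd D < last C))"
  proof (cases "D = [] \<or> hd D = 0")
    case False
    hence Dne: "D \<noteq> []" and hD: "hd D \<noteq> 0" by auto
    have qlt: "q < length B" using Dne unfolding D_def by simp
    have hdD: "hd D = B ! q" unfolding D_def using qlt by (simp add: hd_drop_conv_nth)
    have xk1: "xl u (k + 1) = hd D" using xB[of "Suc q"] kq hdD by simp
    have uk1: "u ! k = hd D" using xk1 by (simp add: xl_def)
    have k2: "1 \<le> k + 1" "k + 1 \<le> length u" using kq lu qlt by auto
    have red1: "red u (k + 1) = Suc (red u k)" using red_Suc[of k u] uk1 hD k2 by simp
    have redk1: "red u (k + 1) = idx v (hd D)" using red_at[OF P dist k2] uk1 hD by simp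
    have ii: "idx v (hd D) = Suc (idx v (last C))" using red1 redk1 redk by simp
    have hset: "hd D \<in> set u" using u BCD Dne by simp
    have d: "Sv v (hd D) \<or> Ev v (hd D)" using dich[OF P hset] hD by simp
    have E1: "Ev v (hd D)" if "last C < hd D"
    proof (rule ccontr)
      assume "\<not> Ev v (hd D)"
      hence "Sv v (hd D)" using d by auto
      hence "Q (k + 1)" using Qk that xk xk1 redk1 k2 unfolding Q_def Sv_def
        by (auto simp: less_Suc_eq)
      thus False using kmax by fastforce
    qed
    have E2: "last C < hd D" if "Ev v (hd D)"
      using that SvC ii by (simp add: Sv_def Ev_def)
    have ne: "hd D \<noteq> last C" using ii by auto
    have ne2: "\<not> last C < hd D \<Longrightarrow> hd D < last C" using ne by linarith
    show ?thesis using E1 E2 d ne2 Dne hD by blast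
  qed (auto)
  have "phi m l u = A @ C @ 0 # D"
    unfolding phi_eq k_def[symmetric] using u kq unfolding C_def D_def by simp
  thus ?thesis using BCD Cne Cpos Cinc SvC L R by blast
qed

lemma phi_c:
  assumes P: "Pos u = v" and u: "u = A @ 0 # B" and zA: "zs A = l - 1" and l1: "1 \<le> l" and ln: "l \<le> length u - m"
    and nA: "\<not> (NL A \<and> NR B)" and nb': "\<not> ((NL A \<and> SR B) \<or> (SL A \<and> SR B \<and> hd B < last A))"
    and cc: "(SL A \<and> NR B) \<or> (SL A \<and> SR B \<and> last A < hd B)"
  shows "\<exists>A' C. A = A' @ C \<and> phi m l u = A' @ 0 # C @ B \<and> C \<noteq> [] \<and> (\<forall>x\<in>set C. 0 < x)
     \<and> (\<forall>t. Suc t < length C \<longrightarrow> C ! Suc t < C ! t) \<and> Sv v (hd C) \<and> Sv v (last C)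
     \<and> (A' = [] \<or> last A' = 0 \<or> (Sv v (last A') \<longleftrightarrow> last A' < hd C))
     \<and> (B = [] \<or> hd B = 0 \<or> last C < hd B)
     \<and> (A' = [] \<or> last A' = 0 \<or> Ev v (last A') \<or> (Sv v (last A') \<and> last A' < hd C))"
proof -
  let ?a = "length A"
  have j: "zpos u l = Suc ?a" using zpos_decomp[OF u zA l1] .
  note nb = nb_facts[OF P u]
  have SLA: "SL A" using cc by auto
  hence Ane: "A \<noteq> []" and SvA: "Sv v (last A)" by (auto simp: SL_def)
  have a1: "1 \<le> ?a" using Ane by (cases A) auto
  have lu: "length u = Suc (?a + length B)" using u by simp
  define Q where "Q = (\<lambda>i. 1 \<le> i \<and> i \<le> ?a \<and> xl u i < red u i \<and> (\<forall>t. i \<le> t \<and> t < ?a \<longrightarrow> xl u (t + 1) < xl u t))"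
  have c1: "\<not> (NonSub u ?a \<and> Subexc u (Suc (Suc ?a)) \<or> Subexc u ?a \<and> Subexc u (Suc (Suc ?a)) \<and> xl u (Suc (Suc ?a)) < xl u ?a)"
    using nb' nb Ane by (auto simp: SR_def)
  have c2: "Subexc u ?a \<and> NonSub u (Suc (Suc ?a)) \<or> Subexc u ?a \<and> Subexc u (Suc (Suc ?a)) \<and> xl u ?a < xl u (Suc (Suc ?a))"
    using cc nb Ane by (auto simp: SR_def)
  have c0: "\<not> (NonSub u ?a \<and> NonSub u (Suc (Suc ?a)))" using nA nb by auto
  have phi_eq: "phi m l u = take (Least Q - 1) u @ [0] @ drop (Least Q - 1) (take ?a u) @ drop (Suc ?a) u"
    using c0 c1 c2 l1 ln unfolding phi_def Let_def j Q_def by (simp, blast)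
  have xA: "xl u t = A ! (t - 1)" if "1 \<le> t" "t \<le> ?a" for t
  proof -
    have "t - 1 < ?a" using that by simp
    thus ?thesis using u by (simp add: xl_def nth_append)
  qed
  have Q0: "Q ?a"
    using nb(2) SLA a1 unfolding Q_def Subexc_def by auto
  define i0 where "i0 = Least Q"
  have Qi: "Q i0" unfolding i0_def using LeastI[of Q, OF Q0] .
  have imin: "\<And>y. y < i0 \<Longrightarrow> \<not> Q y" unfolding i0_def by (rule not_less_Least)
  have i01: "1 \<le> i0" "i0 \<le> ?a" using Qi unfolding Q_def by auto
  define c where "c = ?a - i0 + 1"
  define A' where "A' = take (i0 - 1) A"
  define C where "C = drop (i0 - 1) A"
  have AAC: "A = A' @ C" unfolding A'_def C_def by simp
  have lC: "length C = c" unfolding C_def c_def using i01 by simp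
  have c1': "1 \<le> c" unfolding c_def by simp
  have Cn: "C ! t = xl u (i0 + t)" if "t < c" for t
    unfolding C_def using that i01 xA[of "i0 + t"] by (simp add: c_def)
  have dec: "C ! Suc t < C ! t" if "Suc t < c" for t
  proof -
    have "xl u (i0 + t + 1) < xl u (i0 + t)" using Qi that unfolding Q_def c_def by auto
    thus ?thesis using Cn[of t] Cn[of "Suc t"] that by simp
  qed
  have Cne: "C \<noteq> []" using lC c1' by auto
  have lastC: "last C = last A" unfolding C_def using i01 Ane by (simp add: last_drop)
  have posC: "0 < C ! (c - 1 - s)" if "s < c" for s
    using that
  proof (induct s)
    case 0
    have "C ! (c - 1) = last C" using Cne lC by (simp add: last_conv_nth)
    thus ?case using lastC SvA by (simp add: Sv_def)
  next
    case (Suc s)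
    have "C ! (c - 1 - s) < C ! (c - 1 - Suc s)" using dec[of "c - 1 - Suc s"] Suc.prems
      by (simp add: Suc_diff_Suc)
    thus ?case using Suc by simp
  qed
  have Cpos: "\<forall>x\<in>set C. 0 < x"
  proof
    fix x assume "x \<in> set C"
    then obtain t where t: "t < c" "x = C ! t" using lC by (auto simp: in_set_conv_nth)
    thus "0 < x" using posC[of "c - 1 - t"] by simp
  qed
  have Cdec: "\<forall>t. Suc t < length C \<longrightarrow> C ! Suc t < C ! t" using dec lC by auto
  have hdC: "hd C = xl u i0" using Cn[of 0] c1' Cne by (simp add: hd_conv_nth)
  have hCpos: "0 < hd C" using Cpos Cne by simp
  have redi: "red u i0 = idx v (hd C)" using red_at[OF P dist, of i0] i01 lu hdC hCpos by (simp add: xl_def)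
  have SvhC: "Sv v (hd C)" using Qi hdC redi hCpos unfolding Q_def Sv_def by simp
  have SvlC: "Sv v (last C)" using lastC SvA by simp
  have L: "(A' = [] \<or> last A' = 0 \<or> (Sv v (last A') \<longleftrightarrow> last A' < hd C))
     \<and> (A' = [] \<or> last A' = 0 \<or> Ev v (last A') \<or> (Sv v (last A') \<and> last A' < hd C))"
  proof (cases "A' = [] \<or> last A' = 0")
    case False
    hence A'ne: "A' \<noteq> []" and lA: "last A' \<noteq> 0" by auto
    have i2: "2 \<le> i0" using A'ne unfolding A'_def by auto
    have lA': "last A' = xl u (i0 - 1)" using A'ne i2 i01 xA[of "i0 - 1"] unfolding A'_def
      by (simp add: last_conv_nth)
    have ui: "u ! (i0 - 1) = hd C" using hdC by (simp add: xl_def)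
    have red1: "red u i0 = Suc (red u (i0 - 1))" using red_Suc[of "i0 - 1" u] ui hCpos i01 lu i2 by simp
    have red2: "red u (i0 - 1) = idx v (last A')" using red_at[OF P dist, of "i0 - 1"] i2 i01 lu lA' lA
      by (simp add: xl_def)
    have ii: "idx v (hd C) = Suc (idx v (last A'))" using red1 red2 redi by simp
    have lset: "last A' \<in> set u" using A'ne u AAC by simp
    have d: "Sv v (last A') \<or> Ev v (last A')" using dich[OF P lset] lA by simp
    have E1: "last A' < hd C" if "Sv v (last A')"
    proof (rule ccontr)
      assume "\<not> last A' < hd C"
      moreover have "last A' \<noteq> hd C" using ii by auto
      ultimately have gt: "hd C < last A'" by simp
      have "Q (i0 - 1)"
        unfolding Q_def
      proof (intro conjI allI impI)
        show "1 \<le> i0 - 1" "i0 - 1 \<le> ?a" using i2 i01 by auto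
        show "xl u (i0 - 1) < red u (i0 - 1)" using that red2 lA' by (simp add: Sv_def)
        fix t assume "i0 - 1 \<le> t \<and> t < ?a"
        thus "xl u (t + 1) < xl u t"
        proof (cases "t = i0 - 1")
          case True thus ?thesis using gt lA' hdC i2 by simp
        next
          case False thus ?thesis using Qi \<open>i0 - 1 \<le> t \<and> t < ?a\<close> unfolding Q_def by auto
        qed
      qed
      thus False using imin[of "i0 - 1"] i2 by simp
    qed
    have E2: "Sv v (last A')" if "last A' < hd C"
      using that d SvhC ii by (auto simp: Sv_def Ev_def)
    show ?thesis using E1 E2 d by blast
  qed (auto)
  have R: "B = [] \<or> hd B = 0 \<or> last C < hd B"
  proof (cases "B = [] \<or> hd B = 0")
    case False
    hence Bne: "B \<noteq> []" and hB: "hd B \<noteq> 0" by auto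
    show ?thesis
    proof (cases "NR B")
      case True
      hence EB: "Ev v (hd B)" using Bne hB by (simp add: NR_def)
      have uA: "u ! (?a - 1) = last A" using u Ane by (simp add: nth_append last_conv_nth)
      have uA2: "u ! ?a = 0" "u ! Suc ?a = hd B" using u Bne by (auto simp: nth_append hd_conv_nth)
      have lB: "Suc 0 \<le> length B" using Bne by (cases B) auto
      have "red u (Suc (Suc ?a)) = Suc (red u ?a)"
        using red_Suc[of ?a u] red_Suc[of "Suc ?a" u] uA2 lu lB hB Bne by auto
      moreover have "red u ?a = idx v (last A)" using red_at[OF P dist a1] uA SvA lu by (simp add: Sv_def)
      moreover have "red u (Suc (Suc ?a)) = idx v (hd B)"
        using red_at[OF P dist, of "Suc (Suc ?a)"] uA2 lu lB hB by auto
      ultimately have ii: "idx v (hd B) = Suc (idx v (last A))" by simp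
      thus ?thesis using EB SvA lastC by (simp add: Sv_def Ev_def)
    next
      case False thus ?thesis using cc lastC by auto
    qed
  qed (auto)
  have "phi m l u = A' @ 0 # C @ B"
    unfolding phi_eq i0_def[symmetric] using u i01 unfolding A'_def C_def by simp
  thus ?thesis using AAC Cne Cpos Cdec SvhC SvlC L R by blast
qed

end

lemma step_a_gen:
  assumes zA: "zs A = l - 1" and l1: "1 \<le> l"
    and L: "A = [] \<or> last A = 0 \<or> \<not> Sv v (last A)"
    and R: "B = [] \<or> hd B = 0 \<or> Ev v (hd B)"
  shows "Rl v (Suc l) (A @ 0 # B) = Rl v l (A @ 0 # B)"
proof -
  let ?u = "A @ 0 # B"
  let ?a = "length A"
  have key: "rl v (Suc l) (zc ?u i) (?u ! (i - 1)) (lt ?u (Suc i)) = rl v l (zc ?u i) (?u ! (i - 1)) (lt ?u (Suc i))"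
    if i: "1 \<le> i" "i \<le> length ?u" for i
  proof -
    consider "i < ?a" | "i = ?a" | "i = ?a + 1" | "?a + 1 < i" by linarith
    thus ?thesis
    proof cases
      case 1
      show ?thesis using prefix_region[where A=A and l=l and i=i and Ya="0 # B" and v=v and Yb="0 # B"] zA l1 i 1 by simp
    next
      case 2
      have Ane: "A \<noteq> []" using 2 i by auto
      have e: "?u ! (i - 1) = last A" "lt ?u (Suc i) = 0" "zc ?u i = l - 1"
        using 2 i zA Ane by (auto simp: nth_append lt_Suc zc_def last_conv_nth zero_enat_def)
      show ?thesis unfolding e using L l1 Ane by (auto simp: rl_def zero_enat_def)
    next
      case 3
      have e: "?u ! (i - 1) = 0" "lt ?u (Suc i) = lt B 1" "zc ?u i = l"
        using 3 i zA l1 by (auto simp: nth_append lt_Suc zc_def lt_def)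
      have lD: "lt B 1 = (if B = [] then \<infinity> else enat (hd B))" by (cases B) (auto simp: lt_def)
      show ?thesis unfolding e lD using R by (auto simp: rl_def zero_enat_def)
    next
      case 4
      have "rl v (Suc l) (zc ((A @ [0]) @ B) i) (((A @ [0]) @ B) ! (i - 1)) (lt ((A @ [0]) @ B) (Suc i))
       = rl v l (zc ((A @ [0]) @ B) i) (((A @ [0]) @ B) ! (i - 1)) (lt ((A @ [0]) @ B) (Suc i))"
        using 4 i zA l1 by (intro suffix_region) auto
      thus ?thesis by simp
    qed
  qed
  show ?thesis unfolding Rl_def using key by auto
qed

lemma zs_le_length: "zs X \<le> length X" by (induct X) auto

lemma Rl_large: assumes "zs u < l" shows "Rl v l u = Rl v (Suc l) u"
proof -
  have "rl v (Suc l) (zc u i) (u ! (i - 1)) (lt u (Suc i)) = rl v l (zc u i) (u ! (i - 1)) (lt u (Suc i))"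
    if "1 \<le> i" "i \<le> length u" for i
  proof (rule rl_shift)
    have "zc u i \<le> zs u" unfolding zc_def by (rule zs_take_le)
    thus "u ! (i - 1) = 0 \<longrightarrow> zc u i \<noteq> l" using assms by auto
    show "0 < u ! (i - 1) \<and> lt u (Suc i) = 0 \<longrightarrow> Suc (zc u i) \<noteq> l"
    proof
      assume a: "0 < u ! (i - 1) \<and> lt u (Suc i) = 0"
      hence il: "i < length u" "u ! i = 0" by (auto simp: lt_Suc zero_enat_def split: if_splits)
      have "zs (take (Suc i) u) = Suc (zc u i)" using zs_take_Suc[OF il(1)] il(2) by (simp add: zc_def)
      moreover have "zs (take (Suc i) u) \<le> zs u" by (rule zs_take_le)
      ultimately show "Suc (zc u i) \<noteq> l" using assms by auto
    qed
  qed
  thus ?thesis unfolding Rl_def by auto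
qed

definition Pb :: "nat list \<Rightarrow> nat list \<Rightarrow> nat list \<Rightarrow> bool" where
  "Pb v X Y \<longleftrightarrow> X \<noteq> [] \<and> Sv v (last X) \<and> (Y = [] \<or> hd Y = 0 \<or> Ev v (hd Y) \<or> (Sv v (hd Y) \<and> hd Y < last X))"
definition Pc :: "nat list \<Rightarrow> nat list \<Rightarrow> nat list \<Rightarrow> bool" where
  "Pc v X Y \<longleftrightarrow> Y \<noteq> [] \<and> Sv v (hd Y) \<and> (X = [] \<or> last X = 0 \<or> Ev v (last X) \<or> (Sv v (last X) \<and> last X < hd Y))"

lemma Pb_Pc: "Pb v X Y \<Longrightarrow> Pc v X Y \<Longrightarrow> False"
  unfolding Pb_def Pc_def using SE_excl by (auto simp: Sv_def)

lemma run_unique_b: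
  fixes A1 C1 A2 C2 :: "nat list"
  assumes e: "A1 @ C1 = A2 @ C2"
    and c1: "\<forall>x\<in>set C1. 0 < x" "\<forall>t. Suc t < length C1 \<longrightarrow> C1 ! t < C1 ! Suc t"
    and c2: "\<forall>x\<in>set C2. 0 < x" "\<forall>t. Suc t < length C2 \<longrightarrow> C2 ! t < C2 ! Suc t"
    and ne: "C1 \<noteq> []" "C2 \<noteq> []"
    and L1: "A1 = [] \<or> last A1 = 0 \<or> \<not> last A1 < hd C1"
    and L2: "A2 = [] \<or> last A2 = 0 \<or> \<not> last A2 < hd C2"
  shows "A1 = A2 \<and> C1 = C2"
proof -
  have gen: "False" if "Aa = Ab @ us" "us @ Ca = Cb" "us \<noteq> []" "Ca \<noteq> []"
    "\<forall>x\<in>set Cb. 0 < x" "\<forall>t. Suc t < length Cb \<longrightarrow> Cb ! t < Cb ! Suc t"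
    "Aa = [] \<or> last Aa = 0 \<or> \<not> last Aa < hd Ca" for Aa Ab us Ca Cb :: "nat list"
  proof -
    have la: "last Aa = last us" using that by simp
    have "last us = Cb ! (length us - 1)" using that(2,3) by (auto simp: nth_append last_conv_nth)
    moreover have "hd Ca = Cb ! length us" using that(2,4) by (auto simp: nth_append hd_conv_nth)
    moreover have "Suc (length us - 1) < length Cb" using that by auto
    ultimately have "last us < hd Ca" using that(6) \<open>us \<noteq> []\<close> by (metis Suc_pred' length_greater_0_conv)
    moreover have "0 < last us" using that(2,3,5) last_in_set[OF that(3)] by auto
    ultimately show False using that(7) la that(1,3) by auto
  qed
  from e obtain us where "A1 = A2 @ us \<and> us @ C1 = C2 \<or> A1 @ us = A2 \<and> C1 = us @ C2"
    by (auto simp: append_eq_append_conv2)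
  thus ?thesis
  proof
    assume h: "A1 = A2 @ us \<and> us @ C1 = C2"
    show ?thesis
    proof (cases "us = []")
      case True thus ?thesis using h by simp
    next
      case False thus ?thesis using gen[of A1 A2 us C1 C2] h ne c2 L1 by blast
    qed
  next
    assume h: "A1 @ us = A2 \<and> C1 = us @ C2"
    show ?thesis
    proof (cases "us = []")
      case True thus ?thesis using h by simp
    next
      case False thus ?thesis using gen[of A2 A1 us C2 C1] h ne c1 L2 by blast
    qed
  qed
qed

lemma run_unique_c:
  fixes C1 B1 C2 B2 :: "nat list"
  assumes e: "C1 @ B1 = C2 @ B2"
    and c1: "\<forall>x\<in>set C1. 0 < x" "\<forall>t. Suc t < length C1 \<longrightarrow> C1 ! Suc t < C1 ! t"
    and c2: "\<forall>x\<in>set C2. 0 < x" "\<forall>t. Suc t < length C2 \<longrightarrow> C2 ! Suc t < C2 ! t"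
    and ne: "C1 \<noteq> []" "C2 \<noteq> []"
    and R1: "B1 = [] \<or> hd B1 = 0 \<or> last C1 < hd B1"
    and R2: "B2 = [] \<or> hd B2 = 0 \<or> last C2 < hd B2"
  shows "C1 = C2 \<and> B1 = B2"
proof -
  have gen: "False" if "Ca = Cb @ us" "us @ Ba = Bb" "us \<noteq> []" "Cb \<noteq> []"
    "\<forall>x\<in>set Ca. 0 < x" "\<forall>t. Suc t < length Ca \<longrightarrow> Ca ! Suc t < Ca ! t"
    "Bb = [] \<or> hd Bb = 0 \<or> last Cb < hd Bb" for Ca Cb us Ba Bb :: "nat list"
  proof -
    have hb: "hd Bb = hd us" using that by auto
    have "last Cb = Ca ! (length Cb - 1)" using that(1,4) by (auto simp: nth_append last_conv_nth)
    moreover have "hd us = Ca ! length Cb" using that(1,3) by (auto simp: nth_append hd_conv_nth)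
    moreover have "Suc (length Cb - 1) < length Ca" using that by auto
    ultimately have "hd us < last Cb" using that(6) \<open>Cb \<noteq> []\<close> by (metis Suc_pred' length_greater_0_conv)
    moreover have "0 < hd us" using that by auto
    moreover have "Bb \<noteq> []" using that by auto
    ultimately show False using that(7) hb by auto
  qed
  from e obtain us where "C1 = C2 @ us \<and> us @ B1 = B2 \<or> C1 @ us = C2 \<and> B1 = us @ B2"
    by (auto simp: append_eq_append_conv2)
  thus ?thesis
  proof
    assume h: "C1 = C2 @ us \<and> us @ B1 = B2"
    show ?thesis
    proof (cases "us = []")
      case True thus ?thesis using h by simp
    next
      case False thus ?thesis using gen[of C1 C2 us B1 B2] h ne c1 R2 by blast
    qed
  next
    assume h: "C1 @ us = C2 \<and> B1 = us @ B2"
    show ?thesis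
    proof (cases "us = []")
      case True thus ?thesis using h by simp
    next
      case False thus ?thesis using gen[of C2 C1 us B2 B1] h ne c2 R1 by blast
    qed
  qed
qed

context Dm begin

lemma adj0: assumes P: "Pos u = v" and u: "u = A @ 0 # B" and ne: "A \<noteq> []" "B \<noteq> []"
  and p: "0 < last A" "0 < hd B"
  shows "idx v (hd B) = Suc (idx v (last A))"
proof -
  have "u = butlast A @ last A # [0] @ hd B # tl B" using u ne by simp
  from idx_adj[OF P dist this p(1) p(2)] show ?thesis by (simp add: Pos_def)
qed

lemma NL_SL: assumes P: "Pos u = v" and u: "u = A @ 0 # B"
  shows "NL A \<or> SL A" "NR B \<or> SR B" "NL A \<Longrightarrow> \<not> SL A" "NR B \<Longrightarrow> \<not> SR B"
proof -
  show "NL A \<or> SL A"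
  proof (cases "A = [] \<or> last A = 0")
    case False
    hence "last A \<in> set u" using u by auto
    thus ?thesis using dich[OF P] False by (auto simp: NL_def SL_def)
  qed (auto simp: NL_def)
  show "NR B \<or> SR B"
  proof (cases "B = [] \<or> hd B = 0")
    case False
    hence "hd B \<in> set u" using u by auto
    thus ?thesis using dich[OF P] False by (auto simp: NR_def SR_def)
  qed (auto simp: NR_def)
  show "NL A \<Longrightarrow> \<not> SL A" using SE_excl by (auto simp: NL_def SL_def Sv_def)
  show "NR B \<Longrightarrow> \<not> SR B" using SE_excl by (auto simp: NR_def SR_def Sv_def)
qed

lemma cases_exhaust: assumes P: "Pos u = v" and u: "u = A @ 0 # B"
  shows "(NL A \<and> NR B) \<or> ((NL A \<and> SR B) \<or> (SL A \<and> SR B \<and> hd B < last A))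
     \<or> ((SL A \<and> NR B) \<or> (SL A \<and> SR B \<and> last A < hd B))"
proof -
  have "last A \<noteq> hd B" if "SL A" "SR B"
  proof -
    have "A \<noteq> []" "B \<noteq> []" "0 < last A" "0 < hd B" using that by (auto simp: SL_def SR_def Sv_def)
    from adj0[OF P u this] show ?thesis by auto
  qed
  thus ?thesis using NL_SL[OF P u] by (meson linorder_neqE_nat)
qed

lemma phi_a: assumes P: "Pos u = v" and u: "u = A @ 0 # B" and zA: "zs A = l - 1" and l1: "1 \<le> l"
  and "NL A" "NR B" shows "phi m l u = u"
proof -
  have j: "zpos u l = Suc (length A)" using zpos_decomp[OF u zA l1] .
  have "NonSub u (length A)" "NonSub u (Suc (Suc (length A)))" using nb_facts[OF P u] assms(5,6) by auto
  thus ?thesis unfolding phi_def Let_def j by simp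
qed

lemma Sh_facts: "u \<in> Sh n m v \<longleftrightarrow> length u = n \<and> zs u = n - m \<and> Pos u = v"
  by (simp add: Sh_def zs_def)

lemma Pos_app[simp]: "Pos (X @ Y) = Pos X @ Pos Y" "Pos (0 # Y) = Pos Y" by (auto simp: Pos_def)

lemma phi_step: assumes uS: "u \<in> Sh n m v" and l1: "1 \<le> l"
  shows "phi m l u \<in> Sh n m v \<and> Rl v l (phi m l u) = Rl v (Suc l) u"
proof (cases "l \<le> n - m")
  case False
  have "phi m l u = u" using False uS by (simp add: phi_def Sh_def)
  moreover have "Rl v l u = Rl v (Suc l) u" using False uS by (intro Rl_large) (simp add: Sh_facts)
  ultimately show ?thesis using uS by simp
next
  case True
  have P: "Pos u = v" and lu: "length u = n" and zu: "zs u = n - m" using uS by (auto simp: Sh_facts)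
  have ln: "l \<le> length u - m" using True lu by simp
  obtain A B where u: "u = A @ 0 # B" and zA: "zs A = l - 1" using decomp_exists[OF l1, of u] True zu by auto
  consider "NL A \<and> NR B" | "\<not> (NL A \<and> NR B)" "(NL A \<and> SR B) \<or> (SL A \<and> SR B \<and> hd B < last A)"
    | "\<not> (NL A \<and> NR B)" "\<not> ((NL A \<and> SR B) \<or> (SL A \<and> SR B \<and> hd B < last A))"
      "(SL A \<and> NR B) \<or> (SL A \<and> SR B \<and> last A < hd B)"
    using cases_exhaust[OF P u] by blast
  thus ?thesis
  proof cases
    case 1
    have "phi m l u = u" using phi_a[OF P u zA l1] 1 by simp
    moreover have "Rl v (Suc l) u = Rl v l u" unfolding u
      using 1 SE_excl l1 zA by (intro step_a_gen) (auto simp: NL_def NR_def)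
    ultimately show ?thesis using uS by simp
  next
    case 2
    from phi_b[OF P u zA l1 ln 2] obtain C D where r: "B = C @ D" "phi m l u = A @ C @ 0 # D" "C \<noteq> []"
      "\<forall>x\<in>set C. 0 < x" "\<forall>t. Suc t < length C \<longrightarrow> C ! t < C ! Suc t" "Sv v (last C)"
      "A = [] \<or> last A = 0 \<or> \<not> last A < hd C" "D = [] \<or> hd D = 0 \<or> (last C < hd D \<longleftrightarrow> Ev v (hd D))"
      by blast
    have "Rl v (Suc l) (A @ 0 # C @ D) = Rl v l (A @ C @ 0 # D)" using r l1 zA by (intro step_b) auto
    hence "Rl v (Suc l) u = Rl v l (phi m l u)" using r(1,2) u by simp
    moreover have "phi m l u \<in> Sh n m v" using uS unfolding r(2) Sh_facts using u r(1) by simp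
    ultimately show ?thesis by simp
  next
    case 3
    from phi_c[OF P u zA l1 ln 3] obtain A' C where r: "A = A' @ C" "phi m l u = A' @ 0 # C @ B" "C \<noteq> []"
      "\<forall>x\<in>set C. 0 < x" "\<forall>t. Suc t < length C \<longrightarrow> C ! Suc t < C ! t" "Sv v (hd C)" "Sv v (last C)"
      "A' = [] \<or> last A' = 0 \<or> (Sv v (last A') \<longleftrightarrow> last A' < hd C)" "B = [] \<or> hd B = 0 \<or> last C < hd B"
      by blast
    have zA': "zs A' = l - 1" using zA r(1) zs_pos[OF r(4)] by simp
    have "Rl v (Suc l) (A' @ C @ 0 # B) = Rl v l (A' @ 0 # C @ B)" using r l1 zA' by (intro step_c) auto
    hence "Rl v (Suc l) u = Rl v l (phi m l u)" using r(1,2) u by simp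
    moreover have "phi m l u \<in> Sh n m v" using uS unfolding r(2) Sh_facts using u r(1) by simp
    ultimately show ?thesis by simp
  qed
qed

end

definition clsA :: "nat list \<Rightarrow> nat list \<Rightarrow> nat list \<Rightarrow> nat list \<Rightarrow> bool" where
  "clsA v u X Y \<longleftrightarrow> u = X @ 0 # Y \<and> \<not> Pb v X Y \<and> \<not> Pc v X Y"
definition clsB :: "nat list \<Rightarrow> nat list \<Rightarrow> nat list \<Rightarrow> nat list \<Rightarrow> bool" where
  "clsB v u X Y \<longleftrightarrow> Pb v X Y \<and> (\<exists>A C. X = A @ C \<and> u = A @ 0 # C @ Y \<and> C \<noteq> [] \<and> (\<forall>x\<in>set C. 0 < x)
        \<and> (\<forall>t. Suc t < length C \<longrightarrow> C ! t < C ! Suc t) \<and> (A = [] \<or> last A = 0 \<or> \<not> last A < hd C))"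
definition clsC :: "nat list \<Rightarrow> nat list \<Rightarrow> nat list \<Rightarrow> nat list \<Rightarrow> bool" where
  "clsC v u X Y \<longleftrightarrow> Pc v X Y \<and> (\<exists>C B. Y = C @ B \<and> u = X @ C @ 0 # B \<and> C \<noteq> [] \<and> (\<forall>x\<in>set C. 0 < x)
        \<and> (\<forall>t. Suc t < length C \<longrightarrow> C ! Suc t < C ! t) \<and> (B = [] \<or> hd B = 0 \<or> last C < hd B))"

lemma clsB_unique: assumes "clsB v u1 X Y" "clsB v u2 X Y" shows "u1 = u2"
proof -
  obtain A1 C1 where h1: "X = A1 @ C1" "u1 = A1 @ 0 # C1 @ Y" "C1 \<noteq> []" "\<forall>x\<in>set C1. 0 < x"
        "\<forall>t. Suc t < length C1 \<longrightarrow> C1 ! t < C1 ! Suc t" "A1 = [] \<or> last A1 = 0 \<or> \<not> last A1 < hd C1"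
    using assms(1) unfolding clsB_def by blast
  obtain A2 C2 where h2: "X = A2 @ C2" "u2 = A2 @ 0 # C2 @ Y" "C2 \<noteq> []" "\<forall>x\<in>set C2. 0 < x"
        "\<forall>t. Suc t < length C2 \<longrightarrow> C2 ! t < C2 ! Suc t" "A2 = [] \<or> last A2 = 0 \<or> \<not> last A2 < hd C2"
    using assms(2) unfolding clsB_def by blast
  have "A1 @ C1 = A2 @ C2" using h1(1) h2(1) by simp
  from run_unique_b[OF this h1(4,5) h2(4,5) h1(3) h2(3) h1(6) h2(6)] show ?thesis using h1(2) h2(2) by simp
qed

lemma clsC_unique: assumes "clsC v u1 X Y" "clsC v u2 X Y" shows "u1 = u2"
proof -
  obtain B1 C1 where h1: "Y = C1 @ B1" "u1 = X @ C1 @ 0 # B1" "C1 \<noteq> []" "\<forall>x\<in>set C1. 0 < x"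
        "\<forall>t. Suc t < length C1 \<longrightarrow> C1 ! Suc t < C1 ! t" "B1 = [] \<or> hd B1 = 0 \<or> last C1 < hd B1"
    using assms(1) unfolding clsC_def by blast
  obtain B2 C2 where h2: "Y = C2 @ B2" "u2 = X @ C2 @ 0 # B2" "C2 \<noteq> []" "\<forall>x\<in>set C2. 0 < x"
        "\<forall>t. Suc t < length C2 \<longrightarrow> C2 ! Suc t < C2 ! t" "B2 = [] \<or> hd B2 = 0 \<or> last C2 < hd B2"
    using assms(2) unfolding clsC_def by blast
  have "C1 @ B1 = C2 @ B2" using h1(1) h2(1) by simp
  from run_unique_c[OF this h1(4,5) h2(4,5) h1(3) h2(3) h1(6) h2(6)] show ?thesis using h1(2) h2(2) by simp
qed

lemma cls_unique: assumes "clsA v u1 X Y \<or> clsB v u1 X Y \<or> clsC v u1 X Y"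
  "clsA v u2 X Y \<or> clsB v u2 X Y \<or> clsC v u2 X Y" shows "u1 = u2"
proof -
  have x: "\<not> (clsA v u X Y \<and> clsB v u' X Y)" "\<not> (clsA v u X Y \<and> clsC v u' X Y)"
    "\<not> (clsB v u X Y \<and> clsC v u' X Y)" for u u'
    using Pb_Pc[of v X Y] unfolding clsA_def clsB_def clsC_def by blast+
  show ?thesis using assms x clsB_unique clsC_unique unfolding clsA_def by metis
qed

context Dm begin
lemma classify: assumes uS: "u \<in> Sh n m v" and l1: "1 \<le> l" and ln: "l \<le> n - m"
  shows "\<exists>X Y. phi m l u = X @ 0 # Y \<and> zs X = l - 1 \<and>
   (clsA v u X Y \<or> clsB v u X Y \<or> clsC v u X Y)"
proof -
  have P: "Pos u = v" and lu: "length u = n" and zu: "zs u = n - m" using uS by (auto simp: Sh_facts)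
  have ln': "l \<le> length u - m" using ln lu by simp
  obtain A B where u: "u = A @ 0 # B" and zA: "zs A = l - 1" using decomp_exists[OF l1, of u] ln zu by auto
  consider "NL A \<and> NR B" | "\<not> (NL A \<and> NR B)" "(NL A \<and> SR B) \<or> (SL A \<and> SR B \<and> hd B < last A)"
    | "\<not> (NL A \<and> NR B)" "\<not> ((NL A \<and> SR B) \<or> (SL A \<and> SR B \<and> hd B < last A))"
      "(SL A \<and> NR B) \<or> (SL A \<and> SR B \<and> last A < hd B)"
    using cases_exhaust[OF P u] by blast
  thus ?thesis
  proof cases
    case 1
    have "phi m l u = u" using phi_a[OF P u zA l1] 1 by simp
    moreover have "\<not> Pb v A B" "\<not> Pc v A B" using 1 SE_excl by (auto simp: NL_def NR_def Pb_def Pc_def Sv_def)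
    ultimately show ?thesis using u zA unfolding clsA_def by blast
  next
    case 2
    from phi_b[OF P u zA l1 ln' 2] obtain C D where r: "B = C @ D" "phi m l u = A @ C @ 0 # D" "C \<noteq> []"
      "\<forall>x\<in>set C. 0 < x" "\<forall>t. Suc t < length C \<longrightarrow> C ! t < C ! Suc t" "Sv v (last C)"
      "A = [] \<or> last A = 0 \<or> \<not> last A < hd C" "D = [] \<or> hd D = 0 \<or> Ev v (hd D) \<or> (Sv v (hd D) \<and> hd D < last C)"
      by blast
    have "Pb v (A @ C) D" using r(3,6,8) by (auto simp: Pb_def)
    moreover have "zs (A @ C) = l - 1" using zA zs_pos[OF r(4)] by simp
    moreover have "\<exists>A0 C0. A @ C = A0 @ C0 \<and> u = A0 @ 0 # C0 @ D \<and> C0 \<noteq> [] \<and> (\<forall>x\<in>set C0. 0 < x)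
        \<and> (\<forall>t. Suc t < length C0 \<longrightarrow> C0 ! t < C0 ! Suc t) \<and> (A0 = [] \<or> last A0 = 0 \<or> \<not> last A0 < hd C0)"
      apply (rule exI[of _ A], rule exI[of _ C]) using r(1,3,4,5,7) u by simp
    moreover have "phi m l u = (A @ C) @ 0 # D" using r by simp
    ultimately show ?thesis unfolding clsB_def by blast
  next
    case 3
    from phi_c[OF P u zA l1 ln' 3] obtain A' C where r: "A = A' @ C" "phi m l u = A' @ 0 # C @ B" "C \<noteq> []"
      "\<forall>x\<in>set C. 0 < x" "\<forall>t. Suc t < length C \<longrightarrow> C ! Suc t < C ! t" "Sv v (hd C)"
      "B = [] \<or> hd B = 0 \<or> last C < hd B"
      "A' = [] \<or> last A' = 0 \<or> Ev v (last A') \<or> (Sv v (last A') \<and> last A' < hd C)"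
      by blast
    have "Pc v A' (C @ B)" using r(3,6,8) by (auto simp: Pc_def)
    moreover have "zs A' = l - 1" using zA r(1) zs_pos[OF r(4)] by simp
    moreover have "\<exists>C0 B0. C @ B = C0 @ B0 \<and> u = A' @ C0 @ 0 # B0 \<and> C0 \<noteq> [] \<and> (\<forall>x\<in>set C0. 0 < x)
        \<and> (\<forall>t. Suc t < length C0 \<longrightarrow> C0 ! Suc t < C0 ! t) \<and> (B0 = [] \<or> hd B0 = 0 \<or> last C0 < hd B0)"
      apply (rule exI[of _ C], rule exI[of _ B]) using r(1,3,4,5,7) u by simp
    moreover have "phi m l u = A' @ 0 # (C @ B)" using r by simp
    ultimately show ?thesis unfolding clsC_def by blast
  qed
qed

lemma phi_inj: assumes u1: "u1 \<in> Sh n m v" and u2: "u2 \<in> Sh n m v" and l1: "1 \<le> l"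
  and e: "phi m l u1 = phi m l u2" shows "u1 = u2"
proof (cases "l \<le> n - m")
  case False
  thus ?thesis using e u1 u2 by (simp add: phi_def Sh_def)
next
  case True
  obtain X1 Y1 where c1: "phi m l u1 = X1 @ 0 # Y1" "zs X1 = l - 1"
    "clsA v u1 X1 Y1 \<or> clsB v u1 X1 Y1 \<or> clsC v u1 X1 Y1"
    using classify[OF u1 l1 True] by blast
  obtain X2 Y2 where c2: "phi m l u2 = X2 @ 0 # Y2" "zs X2 = l - 1"
    "clsA v u2 X2 Y2 \<or> clsB v u2 X2 Y2 \<or> clsC v u2 X2 Y2"
    using classify[OF u2 l1 True] by blast
  have "X1 @ 0 # Y1 = X2 @ 0 # Y2" using c1(1) c2(1) e by simp
  from decomp_unique[OF this] c1(2) c2(2) have XY: "X1 = X2" "Y1 = Y2" by auto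
  show ?thesis using cls_unique[of v u1 X1 Y1 u2] c1(3) c2(3) XY by simp
qed

end

lemma RISE_eq: assumes P: "Pos w = v" and d: "distinct v"
  shows "RISE w = Rl v (Suc (length w)) w"
proof -
  have "enat (w ! (i - 1)) \<le> lt w (Suc i) \<longleftrightarrow> rl v (Suc (length w)) (zc w i) (w ! (i - 1)) (lt w (Suc i))"
    if i: "1 \<le> i" "i \<le> length w" for i
  proof -
    have zle: "zc w i \<le> i" unfolding zc_def using zs_le_length[of "take i w"] by simp
    show ?thesis
    proof (cases "w ! (i - 1) = 0")
      case True thus ?thesis using zle i by (simp add: rl_def zero_enat_def[symmetric])
    next
      case False
      have ts: "take i w = take (i - 1) w @ [w ! (i - 1)]"
        using i take_Suc_conv_app_nth[of "i - 1" w] by simp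
      have zl: "zc w i < length w" unfolding zc_def ts using False zs_le_length[of "take (i - 1) w"] i by simp
      show ?thesis
      proof (cases "i < length w")
        case False thus ?thesis using \<open>w ! (i - 1) \<noteq> 0\<close> by (simp add: lt_Suc rl_def)
      next
        case True
        show ?thesis
        proof (cases "w ! i = 0")
          case True thus ?thesis using \<open>i < length w\<close> \<open>w ! (i - 1) \<noteq> 0\<close> zl by (simp add: lt_Suc rl_def zero_enat_def)
        next
          case False
          have r1: "red w (Suc i) = Suc (red w i)" using red_Suc[of i w] False \<open>i < length w\<close> by simp
          have r2: "red w i = idx v (w ! (i - 1))" using red_at[OF P d i] \<open>w ! (i - 1) \<noteq> 0\<close> by simp
          have r3: "red w (Suc i) = idx v (w ! i)" using red_at[OF P d, of "Suc i"] False \<open>i < length w\<close> by simp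
          have "w ! (i - 1) \<noteq> w ! i" using r1 r2 r3 by auto
          thus ?thesis using \<open>i < length w\<close> \<open>w ! (i - 1) \<noteq> 0\<close> False by (auto simp: lt_Suc rl_def zero_enat_def)
        qed
      qed
    qed
  qed
  moreover have "lt w i = enat (w ! (i - 1))" if "1 \<le> i" "i \<le> length w" for i using that by (simp add: lt_def)
  ultimately show ?thesis unfolding RISE_def Rl_def by auto
qed

lemma RISEb_eq: assumes P: "Pos w = v" and d: "distinct v"
  shows "RISEb w = Rl v 1 w"
proof -
  have "((0 < lt w i \<and> lt w i < lt w (i + 1))
     \<or> (lt w i = 0 \<and> lt w (i + 1) = 0)
     \<or> (lt w i = 0 \<and> Exc w (i + 1))
     \<or> (Subexc w i \<and> lt w (i + 1) = 0)) \<longleftrightarrow> rl v 1 (zc w i) (w ! (i - 1)) (lt w (Suc i))"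
    if i: "1 \<le> i" "i \<le> length w" for i
  proof -
    have lti: "lt w i = enat (w ! (i - 1))" using i by (simp add: lt_def)
    have ts: "take i w = take (i - 1) w @ [w ! (i - 1)]"
      using i take_Suc_conv_app_nth[of "i - 1" w] by simp
    have z1: "w ! (i - 1) = 0 \<Longrightarrow> 1 \<le> zc w i" unfolding zc_def ts by simp
    have ex: "Exc w (i + 1) \<longleftrightarrow> i = length w \<or> (i < length w \<and> Ev v (w ! i))"
      unfolding Exc_iff[OF P d] using i by auto
    have sb: "Subexc w i \<longleftrightarrow> Sv v (w ! (i - 1))" unfolding Subexc_iff[OF P d] using i by auto
    show ?thesis unfolding lti ex sb using z1 i
      by (cases "i < length w") (auto simp: lt_Suc rl_def zero_enat_def Sv_def Ev_def)
  qed
  thus ?thesis unfolding RISEb_def Rl_def by auto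
qed

lemma finite_Sh: "finite (Sh n m v)"
proof -
  have "Sh n m v \<subseteq> {w. set w \<subseteq> insert 0 (set v) \<and> length w = n}"
    by (auto simp: Sh_def Pos_def)
  moreover have "finite {w. set w \<subseteq> insert 0 (set v) \<and> length w = n}"
    by (rule finite_lists_length_eq) simp
  ultimately show ?thesis by (rule finite_subset)
qed

theorem theorem1p1:
  fixes m n :: nat and v :: "nat list"
  assumes "derangement m v" and "m \<le> n"
  shows "bij_betw (Phi n m) (Sh n m v) (Sh n m v)
         \<and> (\<forall>w \<in> Sh n m v. RISE w = RISEb (Phi n m w))"
proof -
  interpret Dm m v by unfold_locales (rule assms(1))
  let ?S = "Sh n m v"
  define G where "G k = foldr (phi m) [k..<Suc n]" for k
  define Q where "Q k = ((\<forall>w\<in>?S. G k w \<in> ?S \<and> Rl v k (G k w) = Rl v (Suc n) w) \<and> inj_on (G k) ?S)" for k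
  have Q1: "Q 1"
  proof (rule inc_induct[of 1 "Suc n" Q])
    show "1 \<le> Suc n" by simp
    show "Q (Suc n)" unfolding Q_def G_def by (simp add: inj_on_def)
  next
    fix k assume k: "1 \<le> k" "k < Suc n" and IH: "Q (Suc k)"
    have Gk: "G k w = phi m k (G (Suc k) w)" for w unfolding G_def using k upt_conv_Cons[of k "Suc n"] by simp
    have IH1: "\<forall>w\<in>?S. G (Suc k) w \<in> ?S \<and> Rl v (Suc k) (G (Suc k) w) = Rl v (Suc n) w"
      and IH2: "inj_on (G (Suc k)) ?S" using IH unfolding Q_def by auto
    have A: "\<forall>w\<in>?S. G k w \<in> ?S \<and> Rl v k (G k w) = Rl v (Suc n) w"
    proof
      fix w assume w: "w \<in> ?S"
      have "G (Suc k) w \<in> ?S" using IH1 w by blast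
      from phi_step[OF this k(1)] show "G k w \<in> ?S \<and> Rl v k (G k w) = Rl v (Suc n) w"
        unfolding Gk using IH1 w by simp
    qed
    have B: "inj_on (G k) ?S"
    proof (rule inj_onI)
      fix x y assume x: "x \<in> ?S" and y: "y \<in> ?S" and e: "G k x = G k y"
      have "G (Suc k) x = G (Suc k) y"
        using phi_inj[of "G (Suc k) x" n "G (Suc k) y" k] IH1 x y k(1) e unfolding Gk by blast
      thus "x = y" using IH2 x y by (simp add: inj_on_def)
    qed
    show "Q k" unfolding Q_def using A B by simp
  qed
  have PG: "Phi n m = G 1" unfolding Phi_def G_def by (rule ext) simp
  have img: "G 1 ` ?S = ?S"
    using Q1 finite_Sh unfolding Q_def by (intro endo_inj_surj) auto
  have bij: "bij_betw (Phi n m) ?S ?S" unfolding PG bij_betw_def using img Q1 unfolding Q_def by simp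
  have rise: "\<forall>w \<in> ?S. RISE w = RISEb (Phi n m w)"
  proof
    fix w assume w: "w \<in> ?S"
    have Pw: "Pos w = v" "length w = n" using w by (auto simp: Sh_def)
    have Gw: "G 1 w \<in> ?S" "Rl v 1 (G 1 w) = Rl v (Suc n) w" using Q1 w unfolding Q_def by auto
    have "Pos (G 1 w) = v" using Gw(1) by (simp add: Sh_def)
    hence "RISEb (G 1 w) = Rl v 1 (G 1 w)" using RISEb_eq dist by blast
    moreover have "RISE w = Rl v (Suc n) w" using RISE_eq[OF Pw(1) dist] Pw(2) by simp
    ultimately show "RISE w = RISEb (Phi n m w)" using Gw(2) PG by simp
  qed
  show ?thesis using bij rise by simp
qed

end
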